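(* Consider the averaged buck converter $-L\dot I=V-uV_s$, $C\dot V=I-GV$ with scalar constants $L>0$, $C>0$, $G\ge0$, and a known constant $V_s\neq0$. Assume there exist constants $V^\star>0$, $\bar u\in(0,1)$, $\bar I$ with $0=V^\star-\bar uV_s$ and $0=\bar I-GV^\star$. Consider the dynamic controller $$\dot u=-\frac1{k_d}\big(k_i(u-\bar u)+V_s\dot I\big),$$ with $k_d>0$, $k_i>0$. Then the solution $(I,V,u)$ of the closed-loop system asymptotically converges to $(\bar I,V^\star,\bar u)$.
   Context: $I$ is the inductor current, $V$ the capacitor voltage, $u$ the duty cycle (treated as a state of the closed loop); $I,V,\dot I$ are assumed measured. *)

theory Defs
  imports Complex_Main
begin

end

theory Submission
  imports Defs
begin


lemma deriv_at_pos:
  assumes "(f has_real_derivative D) (at t within {0..})" "t > 0"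
  shows "(f has_real_derivative D) (at t)"
proof -
  have "(f has_real_derivative D) (at t within {0<..})"
  proof -
    have "{0<..} \<subseteq> {0::real..}" by auto
    from DERIV_subset[OF assms(1) this] show ?thesis .
  qed
  moreover have "at t within {0<..} = at t" using assms(2) by (intro at_within_open) auto
  ultimately show ?thesis by simp
qed

lemma lip_from_deriv:
  fixes g g' :: "real \<Rightarrow> real"
  assumes d: "\<And>t. t \<ge> 1 \<Longrightarrow> (g has_real_derivative g' t) (at t)"
    and b: "\<And>t. t \<ge> 1 \<Longrightarrow> \<bar>g' t\<bar> \<le> K"
    and "s \<ge> 1" "t \<ge> 1"
  shows "\<bar>g s - g t\<bar> \<le> K * \<bar>s - t\<bar>"
proof -
  have *: "\<bar>g b - g a\<bar> \<le> K * (b - a)" if "1 \<le> a" "a < b" for a b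
  proof -
    from MVT2[of a b g g'] that d obtain \<xi> where xi: "a < \<xi>" "\<xi> < b" "g b - g a = (b - a) * g' \<xi>"
      by force
    have "\<bar>g b - g a\<bar> = (b - a) * \<bar>g' \<xi>\<bar>" using xi that by (simp add: abs_mult)
    also have "\<dots> \<le> (b - a) * K" using b[of \<xi>] xi that by (intro mult_left_mono) auto
    finally show ?thesis by (simp add: mult.commute)
  qed
  show ?thesis
  proof (cases s t rule: linorder_cases)
    case less then show ?thesis using *[of s t] assms by (simp add: abs_minus_commute)
  next
    case equal then show ?thesis using b[of t] assms by simp
  next
    case greater then show ?thesis using *[of t s] assms by simp
  qed
qed

lemma conv_energy:
  fixes W W' g :: "real \<Rightarrow> real"
  assumes dW: "\<And>t. t \<ge> 1 \<Longrightarrow> (W has_real_derivative W' t) (at t)"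
    and neg: "\<And>t. t \<ge> 1 \<Longrightarrow> W' t \<le> - c * (g t)^2" and c: "c > 0"
    and lb: "\<And>t. t \<ge> 1 \<Longrightarrow> W t \<ge> 0"
    and lip: "\<And>s t. s \<ge> 1 \<Longrightarrow> t \<ge> 1 \<Longrightarrow> \<bar>g s - g t\<bar> \<le> K * \<bar>s - t\<bar>" and K: "K \<ge> 0"
  shows "(g \<longlongrightarrow> 0) at_top"
proof -
  have mono: "W b \<le> W a" if "1 \<le> a" "a \<le> b" for a b
  proof (rule DERIV_nonpos_imp_nonincreasing[OF that(2)])
    fix x assume "a \<le> x" "x \<le> b"
    then have "x \<ge> 1" using that by simp
    moreover have "- c * (g x)^2 \<le> 0" using c by simp
    ultimately show "\<exists>y. DERIV W x :> y \<and> y \<le> 0" using dW neg by (meson order_trans)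
  qed
  define m where "m = Inf (W ` {1..})"
  have bdd: "bdd_below (W ` {1..})" using lb by (intro bdd_belowI2[of _ 0]) auto
  have m_le: "m \<le> W t" if "t \<ge> 1" for t
    unfolding m_def using bdd that by (intro cInf_lower) auto
  have ex: "\<exists>T\<in>{1..}. W T < m + d" if "d > 0" for d
  proof -
    have "Inf (W ` {1..}) < m + d" using that m_def by simp
    from cInf_lessD[OF _ this] show ?thesis by auto
  qed
  show ?thesis
    unfolding tendsto_iff eventually_at_top_linorder
  proof (intro allI impI)
    fix \<epsilon> :: real assume ep: "\<epsilon> > 0"
    define h where "h = \<epsilon> / (2*(K+1))"
    have h: "h > 0" "K * h \<le> \<epsilon>/2" using ep K unfolding h_def by (auto simp: field_simps)
    define \<delta> where "\<delta> = c * (\<epsilon>/2)^2 * h"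
    have "\<delta> > 0" using c ep h unfolding \<delta>_def by simp
    then obtain T where T: "T \<ge> 1" "W T < m + \<delta>" using ex by auto
    show "\<exists>N. \<forall>t\<ge>N. dist (g t) 0 < \<epsilon>"
    proof (intro exI allI impI)
      fix t assume tT: "t \<ge> T"
      show "dist (g t) 0 < \<epsilon>"
      proof (rule ccontr)
        assume "\<not> dist (g t) 0 < \<epsilon>"
        hence ge: "\<bar>g t\<bar> \<ge> \<epsilon>" by simp
        have gs: "(\<epsilon>/2)^2 \<le> (g s)^2" if "t \<le> s" "s \<le> t + h" for s
        proof -
          have "\<bar>g s - g t\<bar> \<le> K * \<bar>s - t\<bar>" using lip[of s t] that tT T by simp
          also have "\<dots> \<le> K * h" using that K by (intro mult_left_mono) auto
          finally have "\<bar>\<epsilon>/2\<bar> \<le> \<bar>g s\<bar>" using ge h ep by linarith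
          thus ?thesis using abs_le_square_iff by blast
        qed
        define \<phi> where "\<phi> s = W s + c*(\<epsilon>/2)^2 * s" for s
        have "\<phi> (t+h) \<le> \<phi> t"
        proof (rule DERIV_nonpos_imp_nonincreasing[of t "t+h" \<phi>])
          show "t \<le> t + h" using h by simp
          fix x assume x: "t \<le> x" "x \<le> t + h"
          have x1: "x \<ge> 1" using x tT T by simp
          have "(\<phi> has_real_derivative W' x + c*(\<epsilon>/2)^2) (at x)"
            unfolding \<phi>_def by (auto intro!: derivative_eq_intros dW[OF x1])
          moreover have "W' x + c*(\<epsilon>/2)^2 \<le> 0"
          proof -
            have "c*(\<epsilon>/2)^2 \<le> c * (g x)^2" using gs[OF x] c by (intro mult_left_mono) auto
            thus ?thesis using neg[OF x1] by simp
          qed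
          ultimately show "\<exists>y. DERIV \<phi> x :> y \<and> y \<le> 0" by blast
        qed
        hence "W (t+h) \<le> W t - \<delta>" unfolding \<phi>_def \<delta>_def by (simp add: algebra_simps)
        moreover have "W t \<le> W T" using mono T tT by simp
        moreover have "m \<le> W (t+h)" using m_le T tT h by simp
        ultimately show False using T by linarith
      qed
    qed
  qed
qed

lemma conv_from_deriv:
  fixes f g :: "real \<Rightarrow> real"
  assumes f0: "(f \<longlongrightarrow> 0) at_top" and a: "a \<noteq> 0"
    and df: "\<And>t. t \<ge> 1 \<Longrightarrow> (f has_real_derivative (a * g t + b * f t)) (at t)"
    and lip: "\<And>s t. s \<ge> 1 \<Longrightarrow> t \<ge> 1 \<Longrightarrow> \<bar>g s - g t\<bar> \<le> K * \<bar>s - t\<bar>" and K: "K \<ge> 0"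
  shows "(g \<longlongrightarrow> 0) at_top"
  unfolding tendsto_iff eventually_at_top_linorder
proof (intro allI impI)
  fix \<epsilon> :: real assume ep: "\<epsilon> > 0"
  define h where "h = \<epsilon> / (3*(K+1))"
  have h: "h > 0" "K * h \<le> \<epsilon>/3" using ep K unfolding h_def by (auto simp: field_simps)
  define \<eta> where "\<eta> = \<bar>a\<bar> * h * \<epsilon> / (3 * (2 + \<bar>b\<bar> * h))"
  have eta: "\<eta> > 0" using a h ep unfolding \<eta>_def by (auto intro!: divide_pos_pos add_pos_nonneg)
  have eta2: "\<eta> * (2 + \<bar>b\<bar> * h) = \<bar>a\<bar> * h * \<epsilon> / 3"
  proof -
    have "2 + \<bar>b\<bar> * h > 0" using h by (simp add: add_pos_nonneg)
    then show ?thesis unfolding \<eta>_def by (simp add: field_simps)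
  qed
  from f0 eta have "\<forall>\<^sub>F t in at_top. dist (f t) 0 < \<eta>" by (simp add: tendsto_iff)
  then obtain N where N: "\<And>t. t \<ge> N \<Longrightarrow> \<bar>f t\<bar> < \<eta>" by (auto simp: eventually_at_top_linorder)
  show "\<exists>N. \<forall>t\<ge>N. dist (g t) 0 < \<epsilon>"
  proof (intro exI[of _ "max N 1"] allI impI)
    fix t assume t: "t \<ge> max N 1"
    from MVT2[of t "t+h" f "\<lambda>s. a * g s + b * f s"] h df t
    obtain \<xi> where xi: "t < \<xi>" "\<xi> < t + h" "f (t+h) - f t = h * (a * g \<xi> + b * f \<xi>)"
      by force
    have ft: "\<bar>f t\<bar> < \<eta>" "\<bar>f (t+h)\<bar> < \<eta>" "\<bar>f \<xi>\<bar> < \<eta>" using N t xi h by auto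
    have "h * \<bar>a\<bar> * \<bar>g \<xi>\<bar> = \<bar>h * (a * g \<xi>)\<bar>" using h by (simp add: abs_mult)
    also have "\<dots> = \<bar>(f (t+h) - f t) - h * b * f \<xi>\<bar>" using xi by (simp add: algebra_simps)
    also have "\<dots> \<le> \<bar>f (t+h)\<bar> + \<bar>f t\<bar> + h * \<bar>b\<bar> * \<bar>f \<xi>\<bar>" 
    proof -
      have e: "\<bar>h * b * f \<xi>\<bar> = h * \<bar>b\<bar> * \<bar>f \<xi>\<bar>" using h by (simp add: abs_mult)
      show ?thesis using e by linarith
    qed
    also have "\<dots> \<le> \<eta> + \<eta> + h * \<bar>b\<bar> * \<eta>" using ft h by (intro add_mono mult_left_mono) auto
    also have "\<dots> = \<bar>a\<bar> * h * \<epsilon> / 3" using eta2 by (simp add: algebra_simps)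
    finally have "h * \<bar>a\<bar> * \<bar>g \<xi>\<bar> \<le> h * \<bar>a\<bar> * (\<epsilon> / 3)" by (simp add: mult.commute)
    hence gxi: "\<bar>g \<xi>\<bar> \<le> \<epsilon>/3" using h a by (simp add: mult_le_cancel_left_pos)
    have "\<bar>g \<xi> - g t\<bar> \<le> K * \<bar>\<xi> - t\<bar>" using lip[of \<xi> t] t xi by simp
    also have "\<dots> \<le> K * h" using xi K by (intro mult_left_mono) auto
    finally show "dist (g t) 0 < \<epsilon>" using gxi h ep by simp
  qed
qed


theorem corollary2:
  fixes L C G Vs Vstar ubar Ibar kd ki :: real
    and I V u dI dV du :: "real \<Rightarrow> real"
  assumes "L > 0" and "C > 0" and "G \<ge> 0" and "Vs \<noteq> 0"
    and "Vstar > 0" and "0 < ubar" and "ubar < 1"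
    and "0 = Vstar - ubar * Vs" and "0 = Ibar - G * Vstar"
    and "kd > 0" and "ki > 0"
    and dI: "\<And>t. t \<ge> 0 \<Longrightarrow> (I has_real_derivative dI t) (at t within {0..})"
    and dV: "\<And>t. t \<ge> 0 \<Longrightarrow> (V has_real_derivative dV t) (at t within {0..})"
    and du: "\<And>t. t \<ge> 0 \<Longrightarrow> (u has_real_derivative du t) (at t within {0..})"
    and eqI: "\<And>t. t \<ge> 0 \<Longrightarrow> - L * dI t = V t - u t * Vs"
    and eqV: "\<And>t. t \<ge> 0 \<Longrightarrow> C * dV t = I t - G * V t"
    and eqU: "\<And>t. t \<ge> 0 \<Longrightarrow> du t = - (1 / kd) * (ki * (u t - ubar) + Vs * dI t)"
  shows "(I \<longlongrightarrow> Ibar) at_top \<and> (V \<longlongrightarrow> Vstar) at_top \<and> (u \<longlongrightarrow> ubar) at_top"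
proof -
  note ps = assms(1-11)
  define x where "x t = I t - Ibar" for t
  define y where "y t = V t - Vstar" for t
  define z where "z t = u t - ubar" for t
  have DI: "(I has_real_derivative dI t) (at t)" if "t \<ge> 1" for t
    using deriv_at_pos[OF dI] that by simp
  have DV: "(V has_real_derivative dV t) (at t)" if "t \<ge> 1" for t
    using deriv_at_pos[OF dV] that by simp
  have DU: "(u has_real_derivative du t) (at t)" if "t \<ge> 1" for t
    using deriv_at_pos[OF du] that by simp
  have Dx: "(x has_real_derivative dI t) (at t)" if "t \<ge> 1" for t
    unfolding x_def[abs_def] using DI[OF that] by (auto intro!: derivative_eq_intros)
  have Dy: "(y has_real_derivative dV t) (at t)" if "t \<ge> 1" for t
    unfolding y_def[abs_def] using DV[OF that] by (auto intro!: derivative_eq_intros)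
  have Dz: "(z has_real_derivative du t) (at t)" if "t \<ge> 1" for t
    unfolding z_def[abs_def] using DU[OF that] by (auto intro!: derivative_eq_intros)
  have e1: "L * dI t = Vs * z t - y t" if "t \<ge> 0" for t
    using eqI[OF that] ps unfolding y_def z_def by (simp add: algebra_simps)
  have e2: "C * dV t = x t - G * y t" if "t \<ge> 0" for t
    using eqV[OF that] ps unfolding x_def y_def by (simp add: algebra_simps)
  have e3: "kd * du t + Vs * dI t = - ki * z t" if "t \<ge> 0" for t
    using eqU[OF that] ps unfolding z_def by (simp add: field_simps)
  have fdI: "dI t = (Vs * z t - y t) / L" if "t \<ge> 0" for t
    using e1[OF that] ps by (simp add: field_simps)
  have fdV: "dV t = x t / C + (- G / C) * y t" if "t \<ge> 0" for t
    using e2[OF that] ps by (simp add: field_simps)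
  have fdu: "du t = (Vs / (L * kd)) * y t + (- (ki + Vs^2 / L) / kd) * z t" if "t \<ge> 0" for t
  proof -
    have "kd * du t = - ki * z t - Vs * dI t" using e3[OF that] by simp
    then show ?thesis using fdI[OF that] ps by (simp add: field_simps power2_eq_square)
  qed
  define W where "W t = ki*L*(x t)^2/2 + ki*C*(y t)^2/2 + (kd*z t + Vs*x t)^2/2" for t
  define W' where "W' t = - ki*G*(y t)^2 - ki*kd*(z t)^2" for t
  have DW: "(W has_real_derivative W' t) (at t)" if t1: "t \<ge> 1" for t
  proof -
    have "(W has_real_derivative (ki*L*x t*dI t + ki*C*y t*dV t + (kd*z t+Vs*x t)*(kd*du t+Vs*dI t))) (at t)"
      unfolding W_def[abs_def] using Dx[OF t1] Dy[OF t1] Dz[OF t1]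
      by (auto intro!: derivative_eq_intros simp: algebra_simps power2_eq_square)
    moreover have "ki*L*x t*dI t + ki*C*y t*dV t + (kd*z t+Vs*x t)*(kd*du t+Vs*dI t) = W' t"
    proof -
      have t0: "t \<ge> 0" using t1 by simp
      have "ki*L*x t*dI t + ki*C*y t*dV t + (kd*z t+Vs*x t)*(kd*du t+Vs*dI t)
          = ki*x t*(L*dI t) + ki*y t*(C*dV t) + (kd*z t+Vs*x t)*(kd*du t+Vs*dI t)"
        by (simp add: algebra_simps)
      also have "\<dots> = ki*x t*(Vs * z t - y t) + ki*y t*(x t - G * y t) + (kd*z t+Vs*x t)*(- ki * z t)"
        by (simp only: e1[OF t0] e2[OF t0] e3[OF t0])
      also have "\<dots> = W' t" unfolding W'_def by (simp add: algebra_simps power2_eq_square)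
      finally show ?thesis .
    qed
    ultimately show ?thesis by simp
  qed
  have W'le: "W' t \<le> - (ki*kd) * (z t)^2" for t
    unfolding W'_def using ps by (simp add: mult_nonneg_nonneg)
  have W0: "W t \<ge> 0" for t unfolding W_def using ps by (intro add_nonneg_nonneg) auto
  have Wmono: "W t \<le> W 1" if "t \<ge> 1" for t
  proof (rule DERIV_nonpos_imp_nonincreasing[of 1 t W])
    show "1 \<le> t" using that .
    fix s assume "1 \<le> s" "s \<le> t"
    moreover have "- (ki*kd) * (z s)^2 \<le> 0" using ps by simp
    ultimately show "\<exists>y. DERIV W s :> y \<and> y \<le> 0" using DW W'le by (meson order_trans)
  qed
  define B where "B = W 1"
  have absq: "\<bar>r\<bar> \<le> 1 + r^2" for r :: real
  proof (cases "\<bar>r\<bar> \<le> 1")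
    case True then show ?thesis using zero_le_power2[of r] by linarith
  next
    case False
    then have "\<bar>r\<bar> * 1 \<le> \<bar>r\<bar> * \<bar>r\<bar>" by (intro mult_left_mono) auto
    moreover have "\<bar>r\<bar> * \<bar>r\<bar> = r^2" by (simp add: power2_eq_square)
    ultimately show ?thesis by linarith
  qed
  define Mx where "Mx = 1 + 2*B/(ki*L)"
  define My where "My = 1 + 2*B/(ki*C)"
  define Mw where "Mw = 1 + 2*B"
  define Mz where "Mz = (Mw + \<bar>Vs\<bar> * Mx) / kd"
  have bx: "\<bar>x t\<bar> \<le> Mx" if "t \<ge> 1" for t
  proof -
    have "0 \<le> ki*C*(y t)^2/2" "0 \<le> (kd*z t + Vs*x t)^2/2" "0 \<le> ki*L*(x t)^2/2" using ps by auto
    then have "ki*L*(x t)^2/2 \<le> B" using Wmono[OF that] unfolding B_def W_def by linarith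
    hence "(x t)^2 \<le> 2*B/(ki*L)" using ps by (simp add: field_simps)
    thus ?thesis using absq[of "x t"] unfolding Mx_def by linarith
  qed
  have by': "\<bar>y t\<bar> \<le> My" if "t \<ge> 1" for t
  proof -
    have "0 \<le> ki*C*(y t)^2/2" "0 \<le> (kd*z t + Vs*x t)^2/2" "0 \<le> ki*L*(x t)^2/2" using ps by auto
    then have "ki*C*(y t)^2/2 \<le> B" using Wmono[OF that] unfolding B_def W_def by linarith
    hence "(y t)^2 \<le> 2*B/(ki*C)" using ps by (simp add: field_simps)
    thus ?thesis using absq[of "y t"] unfolding My_def by linarith
  qed
  have bz: "\<bar>z t\<bar> \<le> Mz" if "t \<ge> 1" for t
  proof -
    have "0 \<le> ki*C*(y t)^2/2" "0 \<le> (kd*z t + Vs*x t)^2/2" "0 \<le> ki*L*(x t)^2/2" using ps by auto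
    then have "(kd*z t + Vs*x t)^2/2 \<le> B" using Wmono[OF that] unfolding B_def W_def by linarith
    hence "\<bar>kd*z t + Vs*x t\<bar> \<le> Mw" using absq[of "kd*z t + Vs*x t"] unfolding Mw_def by linarith
    moreover have "\<bar>Vs*x t\<bar> \<le> \<bar>Vs\<bar> * Mx" using bx[OF that] by (simp add: abs_mult mult_left_mono)
    ultimately have "\<bar>kd * z t\<bar> \<le> Mw + \<bar>Vs\<bar> * Mx" by linarith
    hence "kd * \<bar>z t\<bar> \<le> Mw + \<bar>Vs\<bar> * Mx" using ps by (simp add: abs_mult)
    thus ?thesis unfolding Mz_def using ps by (simp add: field_simps)
  qed
  define KI where "KI = (\<bar>Vs\<bar> * Mz + My) / L"
  define KV where "KV = Mx / C + (G / C) * My"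
  define KU where "KU = (\<bar>Vs\<bar> / (L * kd)) * My + ((ki + Vs^2 / L) / kd) * Mz"
  have Mnn: "Mx \<ge> 0" "My \<ge> 0" "Mz \<ge> 0" using bx[of 1] by'[of 1] bz[of 1] by auto
  have bdI: "\<bar>dI t\<bar> \<le> KI" if "t \<ge> 1" for t
  proof -
    have "\<bar>Vs * z t - y t\<bar> \<le> \<bar>Vs\<bar> * Mz + My"
    proof -
      have "\<bar>Vs * z t\<bar> \<le> \<bar>Vs\<bar> * Mz" using bz[OF that] by (simp add: abs_mult mult_left_mono)
      then show ?thesis using by'[OF that] by linarith
    qed
    thus ?thesis using fdI[of t] that ps unfolding KI_def by (simp add: divide_right_mono)
  qed
  have bdV: "\<bar>dV t\<bar> \<le> KV" if "t \<ge> 1" for t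
  proof -
    have "\<bar>x t / C\<bar> \<le> Mx / C" using bx[OF that] ps by (simp add: divide_right_mono)
    moreover have "\<bar>(- G / C) * y t\<bar> \<le> (G / C) * My" using by'[OF that] ps
      by (simp add: abs_mult abs_of_nonneg divide_right_mono mult_left_mono)
    moreover have "\<bar>dV t\<bar> \<le> \<bar>x t / C\<bar> + \<bar>(- G / C) * y t\<bar>"
      unfolding fdV[of t, OF order_trans[OF zero_le_one that]] by (rule abs_triangle_ineq)
    ultimately show ?thesis unfolding KV_def by linarith
  qed
  have bdu: "\<bar>du t\<bar> \<le> KU" if "t \<ge> 1" for t
  proof -
    have "\<bar>(Vs / (L * kd)) * y t\<bar> \<le> (\<bar>Vs\<bar> / (L * kd)) * My" using by'[OF that] ps
      by (simp add: abs_mult abs_of_nonneg divide_right_mono mult_left_mono)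
    moreover have "\<bar>(- (ki + Vs^2 / L) / kd) * z t\<bar> \<le> ((ki + Vs^2 / L) / kd) * Mz"
    proof -
      have p: "(ki + Vs^2 / L) / kd \<ge> 0" using ps by (simp add: add_nonneg_nonneg)
      have "\<bar>(- (ki + Vs^2 / L) / kd) * z t\<bar> = ((ki + Vs^2 / L) / kd) * \<bar>z t\<bar>"
      proof -
        have "(- (ki + Vs^2 / L) / kd) * z t = - (((ki + Vs^2 / L) / kd) * z t)" using ps by (simp add: field_simps)
        then show ?thesis by (simp only: abs_minus_cancel abs_mult abs_of_nonneg[OF p])
      qed
      also have "\<dots> \<le> ((ki + Vs^2 / L) / kd) * Mz" using p bz[OF that] by (rule mult_left_mono[rotated])
      finally show ?thesis .
    qed
    moreover have "\<bar>du t\<bar> \<le> \<bar>(Vs / (L * kd)) * y t\<bar> + \<bar>(- (ki + Vs^2 / L) / kd) * z t\<bar>"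
      unfolding fdu[of t, OF order_trans[OF zero_le_one that]] by (rule abs_triangle_ineq)
    ultimately show ?thesis unfolding KU_def by linarith
  qed
  have KUnn: "KU \<ge> 0" using bdu[of 1] by simp
  have KVnn: "KV \<ge> 0" using bdV[of 1] by simp
  have KInn: "KI \<ge> 0" using bdI[of 1] by simp
  have limz: "(z \<longlongrightarrow> 0) at_top"
    by (rule conv_energy[OF DW W'le _ W0 lip_from_deriv[OF Dz bdu] KUnn]) (use ps in auto)
  have limy: "(y \<longlongrightarrow> 0) at_top"
  proof (rule conv_from_deriv[OF limz _ _ lip_from_deriv[OF Dy bdV] KVnn])
    show "Vs / (L * kd) \<noteq> 0" using ps by simp
    show "(z has_real_derivative (Vs / (L * kd)) * y t + (- (ki + Vs^2 / L) / kd) * z t) (at t)" if "t \<ge> 1" for t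
      using Dz[OF that] fdu[of t] that by simp
  qed
  have limx: "(x \<longlongrightarrow> 0) at_top"
  proof (rule conv_from_deriv[OF limy _ _ lip_from_deriv[OF Dx bdI] KInn])
    show "1 / C \<noteq> 0" using ps by simp
    show "(y has_real_derivative (1 / C) * x t + (- G / C) * y t) (at t)" if "t \<ge> 1" for t
      using Dy[OF that] fdV[of t] that by simp
  qed
  have "((\<lambda>t. x t + Ibar) \<longlongrightarrow> 0 + Ibar) at_top" by (intro tendsto_add limx tendsto_const)
  moreover have "((\<lambda>t. y t + Vstar) \<longlongrightarrow> 0 + Vstar) at_top" by (intro tendsto_add limy tendsto_const)
  moreover have "((\<lambda>t. z t + ubar) \<longlongrightarrow> 0 + ubar) at_top" by (intro tendsto_add limz tendsto_const)
  ultimately show ?thesis unfolding x_def y_def z_def by simp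
qed

end
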